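(* For every integer $n\geq 1$, $$c_n(231,321 : 231)=c_n(312,321 : 312)=F_n,$$ where $F_n$ is the $n$-th Fibonacci number, indexed by $F_1=1$, $F_2=2$, $F_n=F_{n-1}+F_{n-2}$ for $n\ge 3$.
   Context: $S_n$ is the symmetric group on $[n]=\{1,\dots,n\}$, and a permutation $\pi\in S_n$ is written in one-line notation $\pi=\pi_1\pi_2\cdots\pi_n$ with $\pi_i=\pi(i)$. For $\tau\in S_k$, $k\le n$, $\pi$ contains $\tau$ if there are indices $i_1<\dots<i_k$ with $\pi_{i_s}>\pi_{i_t}$ iff $\tau_s>\tau_t$ for all $1\le s<t\le k$; otherwise $\pi$ avoids $\tau$. $\pi^2$ denotes the composition $\pi\circ\pi$. For patterns $\sigma_1,\sigma_2,\rho$, $c_n(\sigma_1,\sigma_2 : \rho)$ denotes the number of permutations $\pi\in S_n$ such that $\pi$ avoids both $\sigma_1$ and $\sigma_2$ and $\pi^2$ avoids $\rho$. *)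

theory Defs
  imports "HOL-Combinatorics.Permutations"
begin

text \<open>A pattern tau in S_k is given by its one-line notation as a list
  of length k (tau_s = tau ! (s-1), stored 0-indexed).\<close>

definition contains :: "(nat \<Rightarrow> nat) \<Rightarrow> nat \<Rightarrow> nat list \<Rightarrow> bool" where
  "contains p n tau \<longleftrightarrow>
     (\<exists>ix :: nat \<Rightarrow> nat.
        (\<forall>s < length tau. 1 \<le> ix s \<and> ix s \<le> n) \<and>
        (\<forall>s t. s < t \<and> t < length tau \<longrightarrow> ix s < ix t) \<and>
        (\<forall>s t. s < t \<and> t < length tau \<longrightarrow>
              (p (ix s) > p (ix t) \<longleftrightarrow> tau ! s > tau ! t)))"

definition avoids :: "(nat \<Rightarrow> nat) \<Rightarrow> nat \<Rightarrow> nat list \<Rightarrow> bool" where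
  "avoids p n tau \<longleftrightarrow> \<not> contains p n tau"

definition c_count :: "nat \<Rightarrow> nat list \<Rightarrow> nat list \<Rightarrow> nat list \<Rightarrow> nat" where
  "c_count n s1 s2 rho =
     card {p. p permutes {1..n} \<and> avoids p n s1 \<and> avoids p n s2 \<and> avoids (p \<circ> p) n rho}"

text \<open>Fibonacci shifted: F 1 = 1, F 2 = 2, F n = F (n-1) + F (n-2).\<close>
fun F :: "nat \<Rightarrow> nat" where
  "F 0 = 1"
| "F (Suc 0) = 1"
| "F (Suc (Suc n)) = F (Suc n) + F n"

end

theory Submission
  imports Defs
begin


lemma contains3:
  assumes "length tau = 3"
  shows "contains p n tau \<longleftrightarrow> (\<exists>i j k. 1 \<le> i \<and> i < j \<and> j < k \<and> k \<le> n \<and>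
     (p j < p i \<longleftrightarrow> tau!1 < tau!0) \<and> (p k < p i \<longleftrightarrow> tau!2 < tau!0) \<and> (p k < p j \<longleftrightarrow> tau!2 < tau!1))"
proof
  assume "contains p n tau"
  then obtain ix where h1: "\<forall>s < length tau. 1 \<le> ix s \<and> ix s \<le> n"
    and h2: "\<forall>s t. s < t \<and> t < length tau \<longrightarrow> ix s < ix t"
    and h3: "\<forall>s t. s < t \<and> t < length tau \<longrightarrow> (p (ix s) > p (ix t) \<longleftrightarrow> tau ! s > tau ! t)"
    unfolding contains_def by blast
  show "\<exists>i j k. 1 \<le> i \<and> i < j \<and> j < k \<and> k \<le> n \<and>
     (p j < p i \<longleftrightarrow> tau!1 < tau!0) \<and> (p k < p i \<longleftrightarrow> tau!2 < tau!0) \<and> (p k < p j \<longleftrightarrow> tau!2 < tau!1)"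
    apply (rule exI[of _ "ix 0"], rule exI[of _ "ix 1"], rule exI[of _ "ix 2"])
    using h1[rule_format, of 0] h1[rule_format, of 2] h2[rule_format, of 0 1] h2[rule_format, of 1 2]
      h3[rule_format, of 0 1] h3[rule_format, of 0 2] h3[rule_format, of 1 2] assms
    by auto
next
  assume "\<exists>i j k. 1 \<le> i \<and> i < j \<and> j < k \<and> k \<le> n \<and>
     (p j < p i \<longleftrightarrow> tau!1 < tau!0) \<and> (p k < p i \<longleftrightarrow> tau!2 < tau!0) \<and> (p k < p j \<longleftrightarrow> tau!2 < tau!1)"
  then obtain i j k where h: "1 \<le> i" "i < j" "j < k" "k \<le> n"
     "(p j < p i \<longleftrightarrow> tau!1 < tau!0)" "(p k < p i \<longleftrightarrow> tau!2 < tau!0)" "(p k < p j \<longleftrightarrow> tau!2 < tau!1)"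
    by blast
  define ix where "ix = (\<lambda>s::nat. if s = 0 then i else if s = 1 then j else k)"
  have a: "\<forall>s < length tau. 1 \<le> ix s \<and> ix s \<le> n"
    using h assms unfolding ix_def by auto
  have b: "\<forall>s t. s < t \<and> t < length tau \<longrightarrow> ix s < ix t"
    using h assms unfolding ix_def by auto
  have c: "\<forall>s t. s < t \<and> t < length tau \<longrightarrow> (p (ix s) > p (ix t) \<longleftrightarrow> tau ! s > tau ! t)"
  proof (intro allI impI)
    fix s t assume st: "s < t \<and> t < length tau"
    then have "(s = 0 \<and> t = 1) \<or> (s = 0 \<and> t = 2) \<or> (s = 1 \<and> t = 2)" using assms by auto
    then show "(p (ix s) > p (ix t) \<longleftrightarrow> tau ! s > tau ! t)" using h unfolding ix_def by auto
  qed
  show "contains p n tau" unfolding contains_def using a b c by blast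
qed

lemma c231: "contains p n [2,3,1] \<longleftrightarrow> (\<exists>i j k. 1 \<le> i \<and> i < j \<and> j < k \<and> k \<le> n \<and>
     \<not> p j < p i \<and> p k < p i \<and> p k < p j)"
  by (subst contains3) auto
lemma c321: "contains p n [3,2,1] \<longleftrightarrow> (\<exists>i j k. 1 \<le> i \<and> i < j \<and> j < k \<and> k \<le> n \<and>
     p j < p i \<and> p k < p i \<and> p k < p j)"
  by (subst contains3) auto
lemma c312: "contains p n [3,1,2] \<longleftrightarrow> (\<exists>i j k. 1 \<le> i \<and> i < j \<and> j < k \<and> k \<le> n \<and>
     p j < p i \<and> p k < p i \<and> \<not> p k < p j)"
  by (subst contains3) auto

definition A :: "nat \<Rightarrow> (nat \<Rightarrow> nat) set" where
  "A n = {p. p permutes {1..n} \<and> (\<forall>z. p z \<le> Suc z \<and> z \<le> Suc (p z)) \<and> (\<forall>z. p (p z) = z)}"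

lemma near_avoid:
  assumes "\<forall>z. p z \<le> Suc z \<and> z \<le> Suc (p z)" "i < j" "j < k" "p k < p i"
  shows False
proof -
  have "p i \<le> Suc i" "k \<le> Suc (p k)" using assms(1) by auto
  then show False using assms by linarith
qed

lemma id_avoid:
  assumes "\<forall>z. q z = z"
  shows "avoids q n [2,3,1]" "avoids q n [3,1,2]"
  using assms unfolding avoids_def c231 c312 by auto

lemma A_avoid:
  assumes "p \<in> A n"
  shows "avoids p n [2,3,1]" "avoids p n [3,2,1]" "avoids p n [3,1,2]"
    "avoids (p \<circ> p) n [2,3,1]" "avoids (p \<circ> p) n [3,1,2]"
  using assms near_avoid[of p] id_avoid[of "p \<circ> p"]
  unfolding A_def avoids_def c231 c321 c312 by auto



lemma perm_facts:
  assumes "p permutes {1..n}"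
  shows "\<And>z. z \<notin> {1..n} \<Longrightarrow> p z = z" "\<And>z. z \<in> {1..n} \<Longrightarrow> p z \<in> {1..n}"
    "inj p" "p ` {1..n} = {1..n}"
proof -
  show "\<And>z. z \<notin> {1..n} \<Longrightarrow> p z = z" using permutes_not_in[OF assms] by auto
  show "\<And>z. z \<in> {1..n} \<Longrightarrow> p z \<in> {1..n}" using permutes_in_image[OF assms] by auto
  show "inj p" using permutes_inj[OF assms] .
  show "p ` {1..n} = {1..n}" using permutes_image[OF assms] .
qed

lemma lower:
  assumes p: "p permutes {1..n}" and a1: "avoids p n [2,3,1]" and a2: "avoids p n [3,2,1]"
  shows "z \<le> Suc (p z)"
proof (rule ccontr)
  assume nz: "\<not> z \<le> Suc (p z)"
  have zin: "z \<in> {1..n}"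
  proof (rule ccontr)
    assume "z \<notin> {1..n}" then have "p z = z" using perm_facts[OF p] by auto
    then show False using nz by auto
  qed
  have pz: "p z \<in> {1..n}" using perm_facts(2)[OF p zin] .
  have inj: "inj p" using perm_facts[OF p] by auto
  define R where "R = {i\<in>{1..z-1}. p z < p i}"
  define Lo where "Lo = {i\<in>{1..z-1}. p i < p z}"
  have un: "{1..z-1} = R \<union> Lo"
  proof -
    have "p i \<noteq> p z" if "i \<in> {1..z-1}" for i
    proof -
      have "i \<noteq> z" using that by auto
      then show ?thesis using inj by (metis injD)
    qed
    then have "i \<in> {1..z-1} \<Longrightarrow> p i < p z \<or> p z < p i" for i by (meson nat_neq_iff)
    then show ?thesis unfolding R_def Lo_def by blast
  qed
  have "p ` Lo \<subseteq> {1..p z - 1}"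
  proof
    fix v assume "v \<in> p ` Lo"
    then obtain i where i: "i \<in> Lo" "v = p i" by auto
    then have "i \<in> {1..n}" using zin unfolding Lo_def by auto
    then have "p i \<in> {1..n}" using perm_facts(2)[OF p] by auto
    then show "v \<in> {1..p z - 1}" using i unfolding Lo_def by auto
  qed
  then have "card (p ` Lo) \<le> card {1..p z - 1}" by (intro card_mono) auto
  then have "card (p ` Lo) \<le> p z - 1" by simp
  moreover have "card (p ` Lo) = card Lo" using inj by (simp add: card_image inj_on_subset)
  ultimately have cL: "card Lo \<le> p z - 1" by simp
  have "card {1..z-1} = z-1" by simp
  then have "z - 1 = card (R \<union> Lo)" by (subst un[symmetric]) simp
  then have "z - 1 \<le> card R + card Lo" using card_Un_le[of R Lo] by simp
  then have cR: "2 \<le> card R" using cL nz pz by auto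
  have finR: "finite R" unfolding R_def by auto
  then have "R \<noteq> {}" using cR by auto
  define i where "i = Min R"
  have iR: "i \<in> R" using finR \<open>R \<noteq> {}\<close> unfolding i_def by auto
  have "card (R - {i}) \<ge> 1" using cR iR finR by auto
  then have "R - {i} \<noteq> {}" by (metis card.empty not_one_le_zero)
  then obtain j where jR: "j \<in> R - {i}" by blast
  have "i \<le> j" using finR jR unfolding i_def by auto
  then have ij: "i < j" using jR by auto
  have jz: "j < z" "1 \<le> i" "z \<le> n" using jR iR zin unfolding R_def by auto
  have pij: "p z < p i" "p z < p j" using iR jR unfolding R_def by auto
  show False
  proof (cases "p j < p i")
    case True
    then have "contains p n [3,2,1]" unfolding c321 using ij jz pij by blast
    then show False using a2 unfolding avoids_def by simp
  next
    case False
    then have "contains p n [2,3,1]" unfolding c231 using ij jz pij by blast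
    then show False using a1 unfolding avoids_def by simp
  qed
qed

lemma L:
  assumes p: "p permutes {1..n}" and low: "\<forall>z. z \<le> Suc (p z)" and x: "x \<in> {1..n}"
    and m: "x \<le> m" "m < p x"
  shows "p (Suc m) = m"
proof -
  have px: "p x \<in> {1..n}" using perm_facts(2)[OF p x] .
  define P where "P = {z\<in>{1..n}. p z \<le> m}"
  have img: "p ` P = {1..m}"
  proof
    show "p ` P \<subseteq> {1..m}" using perm_facts(2)[OF p] unfolding P_def by fastforce
    show "{1..m} \<subseteq> p ` P"
    proof
      fix v assume v: "v \<in> {1..m}"
      then have "v \<in> p ` {1..n}" using perm_facts(4)[OF p] px m by auto
      then obtain z where "z \<in> {1..n}" "v = p z" by auto
      then show "v \<in> p ` P" using v unfolding P_def by auto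
    qed
  qed
  have "card P = m"
  proof -
    have "card (p ` P) = card P" using perm_facts(3)[OF p] by (simp add: card_image inj_on_subset)
    then show ?thesis using img by simp
  qed
  moreover have sub: "P \<subseteq> {1..Suc m} - {x}"
  proof
    fix z assume "z \<in> P"
    then have "z \<in> {1..n}" "p z \<le> m" unfolding P_def by auto
    moreover have "z \<le> Suc (p z)" using low by auto
    ultimately show "z \<in> {1..Suc m} - {x}" using m by auto
  qed
  moreover have "card ({1..Suc m} - {x}) = m" using x m by auto
  ultimately have "P = {1..Suc m} - {x}" by (intro card_subset_eq) auto
  then have "Suc m \<in> P" using m by auto
  then have "p (Suc m) \<le> m" unfolding P_def by auto
  moreover have "Suc m \<le> Suc (p (Suc m))" using low by auto
  ultimately show ?thesis by simp
qed

lemma L2: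
  assumes p: "p permutes {1..n}" and up: "\<forall>z. p z \<le> Suc z" and x: "x \<in> {1..n}"
    and m: "p x < x"
  shows "p (x - 1) = x"
proof -
  have px: "p x \<in> {1..n}" using perm_facts(2)[OF p x] .
  define Q where "Q = {z\<in>{1..n}. x \<le> p z}"
  have img: "p ` Q = {x..n}"
  proof
    show "p ` Q \<subseteq> {x..n}" using perm_facts(2)[OF p] unfolding Q_def by fastforce
    show "{x..n} \<subseteq> p ` Q"
    proof
      fix v assume v: "v \<in> {x..n}"
      then have "v \<in> p ` {1..n}" using perm_facts(4)[OF p] x by auto
      then obtain z where "z \<in> {1..n}" "v = p z" by auto
      then show "v \<in> p ` Q" using v unfolding Q_def by auto
    qed
  qed
  have "card Q = Suc n - x"
  proof -
    have "card (p ` Q) = card Q" using perm_facts(3)[OF p] by (simp add: card_image inj_on_subset)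
    then show ?thesis using img by simp
  qed
  moreover have sub: "Q \<subseteq> {x-1..n} - {x}"
  proof
    fix z assume "z \<in> Q"
    then have "z \<in> {1..n}" "x \<le> p z" unfolding Q_def by auto
    moreover have "p z \<le> Suc z" using up by auto
    ultimately show "z \<in> {x-1..n} - {x}" using m by auto
  qed
  moreover have "card ({x-1..n} - {x}) = Suc n - x" using x m px by auto
  ultimately have "Q = {x-1..n} - {x}" by (intro card_subset_eq) auto
  then have "x - 1 \<in> Q" using m x px by auto
  then have "x \<le> p (x - 1)" unfolding Q_def by auto
  moreover have "p (x - 1) \<le> Suc (x - 1)" using up by auto
  ultimately show ?thesis using m px by auto
qed

lemma dir2:
  assumes p: "p permutes {1..n}" and a1: "avoids p n [2,3,1]" and a2: "avoids p n [3,2,1]"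
    and a3: "avoids (p \<circ> p) n [2,3,1]"
  shows "p \<in> A n"
proof -
  have low: "\<forall>z. z \<le> Suc (p z)" using lower[OF p a1 a2] by auto
  have up: "p z \<le> Suc z" for z
  proof (rule ccontr)
    assume nz: "\<not> p z \<le> Suc z"
    have zin: "z \<in> {1..n}"
    proof (rule ccontr)
      assume "z \<notin> {1..n}" then have "p z = z" using perm_facts[OF p] by auto
      then show False using nz by auto
    qed
    have pz: "p z \<in> {1..n}" using perm_facts(2)[OF p zin] .
    have e1: "p (Suc z) = z" using L[OF p low zin, of z] nz by auto
    have e2: "p (Suc (Suc z)) = Suc z" using L[OF p low zin, of "Suc z"] nz by auto
    have e3: "p (p z) = p z - 1" using L[OF p low zin, of "p z - 1"] nz
      by simp
    have "contains (p \<circ> p) n [2,3,1]" unfolding c231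
      apply (rule exI[of _ z], rule exI[of _ "Suc z"], rule exI[of _ "Suc (Suc z)"])
      using e1 e2 e3 zin pz nz by auto
    then show False using a3 unfolding avoids_def by simp
  qed
  have inv: "p (p z) = z" for z
  proof (cases "z \<in> {1..n}")
    case False then show ?thesis using perm_facts[OF p] by auto
  next
    case zin: True
    have "p z = z \<or> p z = Suc z \<or> p z < z" using up[of z] by auto
    moreover have "p z = Suc z \<Longrightarrow> p (p z) = z" using L[OF p low zin, of z] by auto
    moreover have "p (p z) = z" if lt: "p z < z"
    proof -
      have "p z = z - 1" using low[rule_format, of z] lt by linarith
      moreover have "p (z - 1) = z" using L2[OF p _ zin lt] up by auto
      ultimately show ?thesis by simp
    qed
    ultimately show ?thesis by auto
  qed
  show ?thesis unfolding A_def using p low up inv by auto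
qed



lemma permutes_restrict:
  assumes "p permutes S" "T \<subseteq> S" "\<forall>x\<in>S-T. p x = x"
  shows "p permutes T"
  using assms unfolding permutes_def by blast

definition sw :: "nat \<Rightarrow> nat \<Rightarrow> nat" where
  "sw m x = (if x = m then Suc m else if x = Suc m then m else x)"

lemma sw_sw[simp]: "sw m (sw m x) = x" unfolding sw_def by auto

lemma sw_permutes: "sw (Suc n) permutes {1..Suc (Suc n)}"
proof (rule bij_imp_permutes)
  show "bij_betw (sw (Suc n)) {1..Suc (Suc n)} {1..Suc (Suc n)}"
    by (rule bij_betw_byWitness[of _ "sw (Suc n)"]) (auto simp: sw_def)
  show "\<And>x. x \<notin> {1..Suc (Suc n)} \<Longrightarrow> sw (Suc n) x = x" by (auto simp: sw_def)
qed

lemma A_fin: "finite (A n)"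
  by (rule finite_subset[OF _ finite_permutations[of "{1..n}"]]) (auto simp: A_def)

lemma A_range: "p \<in> A n \<Longrightarrow> z \<le> n \<longleftrightarrow> p z \<le> n"
proof -
  assume p: "p \<in> A n"
  then have pp: "p permutes {1..n}" unfolding A_def by auto
  show ?thesis
  proof (cases "z \<in> {1..n}")
    case True then show ?thesis using perm_facts(2)[OF pp] by auto
  next
    case False then show ?thesis using perm_facts(1)[OF pp] by auto
  qed
qed

lemma A0: "A 0 = {id}" unfolding A_def by auto
lemma A1: "A (Suc 0) = {id}" unfolding A_def by auto

lemma A_step:
  "A (Suc (Suc n)) = A (Suc n) \<union> (\<lambda>q. sw (Suc n) \<circ> q) ` A n"
    (is "?L = ?R1 \<union> ?R2")
proof (intro equalityI subsetI)
  fix p assume pL: "p \<in> ?L"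
  then have pp: "p permutes {1..Suc (Suc n)}" and d: "\<forall>z. p z \<le> Suc z \<and> z \<le> Suc (p z)"
    and iv: "\<forall>z. p (p z) = z" unfolding A_def by auto
  have "p (Suc (Suc n)) \<in> {1..Suc (Suc n)}" using perm_facts(2)[OF pp] by auto
  then have "p (Suc (Suc n)) = Suc (Suc n) \<or> p (Suc (Suc n)) = Suc n"
    using d[rule_format, of "Suc (Suc n)"] by auto
  then show "p \<in> ?R1 \<union> ?R2"
  proof
    assume fx: "p (Suc (Suc n)) = Suc (Suc n)"
    have "p permutes {1..Suc n}" using fx by (intro permutes_restrict[OF pp]) (auto simp: le_Suc_eq)
    then show ?thesis using d iv unfolding A_def by auto
  next
    assume fx: "p (Suc (Suc n)) = Suc n"
    have fx2: "p (Suc n) = Suc (Suc n)" using iv[rule_format, of "Suc (Suc n)"] fx by simp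
    define q where "q = sw (Suc n) \<circ> p"
    have qp: "q permutes {1..Suc (Suc n)}" unfolding q_def by (rule permutes_compose[OF pp sw_permutes])
    have small: "p z \<le> n" if "z \<le> n" for z
    proof -
      have "p z \<noteq> Suc n"
      proof
        assume "p z = Suc n" then have "p (p z) = Suc (Suc n)" using fx2 by simp
        then show False using iv that by simp
      qed
      moreover have "p z \<noteq> Suc (Suc n)"
      proof
        assume "p z = Suc (Suc n)" then have "p (p z) = Suc n" using fx by simp
        then show False using iv that by simp
      qed
      moreover have "p z \<le> Suc z" using d by auto
      ultimately show ?thesis using that by linarith
    qed
    have big: "p z = z" if "Suc (Suc n) < z" for z using perm_facts(1)[OF pp] that by auto
    have qv: "q z = (if z \<le> n then p z else z)" for z
    proof -
      consider "z \<le> n" | "z = Suc n" | "z = Suc (Suc n)" | "Suc (Suc n) < z" by linarith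
      then show ?thesis
      proof cases
        case 1 then show ?thesis using small[OF 1] unfolding q_def sw_def by auto
      next
        case 2 then show ?thesis using fx2 unfolding q_def sw_def by auto
      next
        case 3 then show ?thesis using fx unfolding q_def sw_def by auto
      next
        case 4 then show ?thesis using big[OF 4] unfolding q_def sw_def by auto
      qed
    qed
    have "q permutes {1..n}" using qv by (intro permutes_restrict[OF qp]) auto
    moreover have "\<forall>z. q z \<le> Suc z \<and> z \<le> Suc (q z)" using qv d by auto
    moreover have "q (q z) = z" for z
    proof (cases "z \<le> n")
      case True then show ?thesis using qv small[OF True] iv by simp
    next
      case False then show ?thesis using qv by simp
    qed
    ultimately have "q \<in> A n" unfolding A_def by auto
    moreover have "p = sw (Suc n) \<circ> q" unfolding q_def by (auto simp: fun_eq_iff)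
    ultimately show ?thesis by auto
  qed
next
  fix p assume "p \<in> ?R1 \<union> ?R2"
  then show "p \<in> ?L"
  proof
    assume "p \<in> ?R1" then show ?thesis unfolding A_def using permutes_subset by fastforce
  next
    assume "p \<in> ?R2"
    then obtain q where q: "q \<in> A n" "p = sw (Suc n) \<circ> q" by auto
    then have qp: "q permutes {1..n}" and d: "\<forall>z. q z \<le> Suc z \<and> z \<le> Suc (q z)"
      and iv: "\<forall>z. q (q z) = z" unfolding A_def by auto
    have qp2: "q permutes {1..Suc (Suc n)}" using permutes_subset[OF qp] by auto
    have pv: "p z = (if z \<le> n then q z else sw (Suc n) z)" for z
    proof (cases "z \<le> n")
      case True
      then have "q z \<le> n" using A_range[OF q(1)] by auto
      then show ?thesis using True q(2) by (simp add: sw_def)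
    next
      case False
      then have "q z = z" using perm_facts(1)[OF qp] by auto
      then show ?thesis using False q(2) by simp
    qed
    have "p permutes {1..Suc (Suc n)}" unfolding q(2) by (rule permutes_compose[OF qp2 sw_permutes])
    moreover have "p z \<le> Suc z \<and> z \<le> Suc (p z)" for z
      using pv[of z] d by (auto simp: sw_def)
    moreover have "p (p z) = z" for z
    proof (cases "z \<le> n")
      case True
      then have "q z \<le> n" using A_range[OF q(1)] by auto
      then show ?thesis using pv True iv by simp
    next
      case False
      then have "\<not> sw (Suc n) z \<le> n" by (auto simp: sw_def)
      then show ?thesis using pv False by simp
    qed
    ultimately show ?thesis unfolding A_def by auto
  qed
qed

lemma A_card: "card (A n) = F n"
proof (induction n rule: F.induct)
  case 1 then show ?case by (simp add: A0)
next
  case 2 then show ?case by (simp add: A1)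
next
  case (3 n)
  have disj: "A (Suc n) \<inter> (\<lambda>q. sw (Suc n) \<circ> q) ` A n = {}"
  proof -
    have "p (Suc (Suc n)) = Suc (Suc n)" if "p \<in> A (Suc n)" for p
      using that perm_facts(1)[of p "Suc n"] unfolding A_def by auto
    moreover have "(sw (Suc n) \<circ> q) (Suc (Suc n)) = Suc n" if "q \<in> A n" for q
      using that perm_facts(1)[of q n] unfolding A_def by (auto simp: sw_def)
    ultimately show ?thesis by force
  qed
  have inj: "inj_on (\<lambda>q. sw (Suc n) \<circ> q) (A n)"
  proof (rule inj_onI)
    fix a b assume "sw (Suc n) \<circ> a = sw (Suc n) \<circ> b"
    then have "sw (Suc n) (sw (Suc n) (a x)) = sw (Suc n) (sw (Suc n) (b x))" for x by (metis comp_apply)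
    then show "a = b" by (auto simp: fun_eq_iff)
  qed
  have "card (A (Suc (Suc n))) = card (A (Suc n)) + card ((\<lambda>q. sw (Suc n) \<circ> q) ` A n)"
    unfolding A_step by (rule card_Un_disjoint[OF A_fin _ disj]) (simp add: A_fin)
  also have "\<dots> = F (Suc n) + F n" using 3 card_image[OF inj] by simp
  finally show ?case by simp
qed



definition Rf :: "nat \<Rightarrow> nat \<Rightarrow> nat" where
  "Rf n i = (if i \<in> {1..n} then Suc n - i else i)"

lemma Rf_Rf[simp]: "Rf n (Rf n i) = i" unfolding Rf_def by auto

lemma Rf_permutes: "Rf n permutes {1..n}"
proof (rule bij_imp_permutes)
  show "bij_betw (Rf n) {1..n} {1..n}"
    by (rule bij_betw_byWitness[of _ "Rf n"]) (auto simp: Rf_def)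
  show "\<And>x. x \<notin> {1..n} \<Longrightarrow> Rf n x = x" by (auto simp: Rf_def)
qed

lemma rc_val:
  assumes "p permutes {1..n}" "x \<in> {1..n}"
  shows "(Rf n \<circ> p \<circ> Rf n) (Suc n - x) = Suc n - p x"
proof -
  have "Rf n (Suc n - x) = x" using assms(2) by (auto simp: Rf_def)
  moreover have "p x \<in> {1..n}" using perm_facts(2)[OF assms] .
  ultimately show ?thesis by (auto simp: Rf_def)
qed

lemma rc231:
  assumes p: "p permutes {1..n}" and c: "contains p n [2,3,1]"
  shows "contains (Rf n \<circ> p \<circ> Rf n) n [3,1,2]"
proof -
  obtain i j k where h: "1 \<le> i" "i < j" "j < k" "k \<le> n" "\<not> p j < p i" "p k < p i" "p k < p j"
    using c unfolding c231 by blast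
  have r: "(Rf n \<circ> p \<circ> Rf n) (Suc n - x) = Suc n - p x" if "x \<in> {i,j,k}" for x
    using rc_val[OF p, of x] that h by auto
  have v: "p x \<in> {1..n}" if "x \<in> {i,j,k}" for x using perm_facts(2)[OF p, of x] that h by auto
  show ?thesis unfolding c312
    apply (rule exI[of _ "Suc n - k"], rule exI[of _ "Suc n - j"], rule exI[of _ "Suc n - i"])
    using r[of i] r[of j] r[of k] v[of i] v[of j] v[of k] h by auto
qed

lemma rc321:
  assumes p: "p permutes {1..n}" and c: "contains p n [3,2,1]"
  shows "contains (Rf n \<circ> p \<circ> Rf n) n [3,2,1]"
proof -
  obtain i j k where h: "1 \<le> i" "i < j" "j < k" "k \<le> n" "p j < p i" "p k < p i" "p k < p j"
    using c unfolding c321 by blast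
  have r: "(Rf n \<circ> p \<circ> Rf n) (Suc n - x) = Suc n - p x" if "x \<in> {i,j,k}" for x
    using rc_val[OF p, of x] that h by auto
  have v: "p x \<in> {1..n}" if "x \<in> {i,j,k}" for x using perm_facts(2)[OF p, of x] that h by auto
  show ?thesis unfolding c321
    apply (rule exI[of _ "Suc n - k"], rule exI[of _ "Suc n - j"], rule exI[of _ "Suc n - i"])
    using r[of i] r[of j] r[of k] v[of i] v[of j] v[of k] h by auto
qed

lemma RR: "Rf n \<circ> (Rf n \<circ> p \<circ> Rf n) \<circ> Rf n = p" by (auto simp: fun_eq_iff)
lemma RR2: "(Rf n \<circ> p \<circ> Rf n) \<circ> (Rf n \<circ> p \<circ> Rf n) = Rf n \<circ> (p \<circ> p) \<circ> Rf n" by (auto simp: fun_eq_iff)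

lemma rc_A:
  assumes "q \<in> A n"
  shows "Rf n \<circ> q \<circ> Rf n \<in> A n"
proof -
  have qp: "q permutes {1..n}" and d: "\<forall>z. q z \<le> Suc z \<and> z \<le> Suc (q z)"
    and iv: "\<forall>z. q (q z) = z" using assms unfolding A_def by auto
  have pp: "Rf n \<circ> q \<circ> Rf n permutes {1..n}"
    by (rule permutes_compose[OF Rf_permutes permutes_compose[OF qp Rf_permutes]])
  have dd: "(Rf n \<circ> q \<circ> Rf n) z \<le> Suc z \<and> z \<le> Suc ((Rf n \<circ> q \<circ> Rf n) z)" for z
  proof (cases "z \<in> {1..n}")
    case True
    define x where "x = Suc n - z"
    have x: "x \<in> {1..n}" "z = Suc n - x" using True unfolding x_def by auto
    have "(Rf n \<circ> q \<circ> Rf n) z = Suc n - q x" using rc_val[OF qp x(1)] x(2) by simp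
    moreover have "q x \<in> {1..n}" using perm_facts(2)[OF qp x(1)] .
    moreover have "q x \<le> Suc x" "x \<le> Suc (q x)" using d by auto
    ultimately show ?thesis using x by auto
  next
    case False
    then have "(Rf n \<circ> q \<circ> Rf n) z = z" using perm_facts(1)[OF qp] by (auto simp: Rf_def)
    then show ?thesis by simp
  qed
  have "(Rf n \<circ> q \<circ> Rf n) ((Rf n \<circ> q \<circ> Rf n) z) = z" for z using iv by simp
  then show ?thesis unfolding A_def using pp dd by auto
qed

lemma dir2b:
  assumes p: "p permutes {1..n}" and a1: "avoids p n [3,1,2]" and a2: "avoids p n [3,2,1]"
    and a3: "avoids (p \<circ> p) n [3,1,2]"
  shows "p \<in> A n"
proof -
  define q where "q = Rf n \<circ> p \<circ> Rf n"
  have qp: "q permutes {1..n}" unfolding q_def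
    by (rule permutes_compose[OF Rf_permutes permutes_compose[OF p Rf_permutes]])
  have qqp: "q \<circ> q permutes {1..n}" by (rule permutes_compose[OF qp qp])
  have b1: "avoids q n [2,3,1]" using rc231[OF qp] a1 unfolding avoids_def q_def RR by auto
  have b2: "avoids q n [3,2,1]" using rc321[OF qp] a2 unfolding avoids_def q_def RR by auto
  have b3: "avoids (q \<circ> q) n [2,3,1]" using rc231[OF qqp] a3 unfolding avoids_def q_def RR2 RR by auto
  have "q \<in> A n" by (rule dir2[OF qp b1 b2 b3])
  then have "Rf n \<circ> q \<circ> Rf n \<in> A n" by (rule rc_A)
  then show ?thesis unfolding q_def RR .
qed

lemma A_perm: "p \<in> A n \<Longrightarrow> p permutes {1..n}" by (simp add: A_def)

theorem theorem3p2:
  fixes n :: nat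
  assumes "n \<ge> 1"
  shows "c_count n [2,3,1] [3,2,1] [2,3,1] = F n
       \<and> c_count n [3,1,2] [3,2,1] [3,1,2] = F n"
proof -
  have e1: "{p. p permutes {1..n} \<and> avoids p n [2,3,1] \<and> avoids p n [3,2,1] \<and> avoids (p \<circ> p) n [2,3,1]} = A n"
    using dir2 A_avoid A_perm by blast
  have e2: "{p. p permutes {1..n} \<and> avoids p n [3,1,2] \<and> avoids p n [3,2,1] \<and> avoids (p \<circ> p) n [3,1,2]} = A n"
    using dir2b A_avoid A_perm by blast
  show ?thesis unfolding c_count_def e1 e2 A_card by simp
qed

end
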